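(* Assume (A) holds. There exists a constant $c>0$ depending only on the data of (A) such that for every $T>0$, all $t\in[-T,T]$ and all $\mathbf{p}\in\mathbb{R}^N$: $$\int_0^1\int_{\mathbb{S}^{d-1}}|\langle\mathbb{M}_t\mathbf{p},e^{vA}B\sigma\mathbf{s}\rangle|^\alpha\mu(d\mathbf{s})\,dv\ge c|\mathbb{M}_t\mathbf{p}|^\alpha.$$
   Context: Setting: $1\le d<N$, $n\ge1$, $d_1=d\ge\dots\ge d_n>0$, $N=\sum_id_i$; $\alpha\in(0,2)$; $\mu$ is the spectral measure on $\mathbb{S}^{d-1}$ of a symmetric $\alpha$-stable Lévy measure on $\mathbb{R}^d$. Assumption (A): (UE) $\sigma\in\mathbb{R}^{d\times d}$ with $\kappa^{-1}|x|^2\le\langle\sigma\sigma^*x,x\rangle\le\kappa|x|^2$; (ND) $\eta^{-1}|\lambda|^\alpha\le\int_{\mathbb{S}^{d-1}}|\langle\lambda,s\rangle|^\alpha\mu(ds)\le\eta|\lambda|^\alpha$ for all $\lambda\in\mathbb{R}^d$; (H) $A\in\mathbb{R}^{N\times N}$ is a block matrix whose only nonzero blocks are $A_{i,i-1}\in\mathbb{R}^{d_i\times d_{i-1}}$, $i=2,\dots,n$, each of rank $d_i$. $B=(I_{d\times d},0,\dots,0)^T\in\mathbb{R}^{N\times d}$. $\mathbb{M}_t=\mathrm{diag}(I_{d_1\times d_1},tI_{d_2\times d_2},\dots,t^{n-1}I_{d_n\times d_n})$. *)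

theory Defs
  imports "HOL-Analysis.Analysis"
begin

text \<open>Vectors of R^m are functions nat => real (only coordinates < m matter);
  matrices are functions nat => nat => real (entries with indices < m matter).\<close>

definition inner_n :: "nat \<Rightarrow> (nat \<Rightarrow> real) \<Rightarrow> (nat \<Rightarrow> real) \<Rightarrow> real" where
  "inner_n m x y = (\<Sum>i<m. x i * y i)"

definition norm_n :: "nat \<Rightarrow> (nat \<Rightarrow> real) \<Rightarrow> real" where
  "norm_n m x = sqrt (\<Sum>i<m. (x i)\<^sup>2)"

definition mat_vec :: "nat \<Rightarrow> (nat \<Rightarrow> nat \<Rightarrow> real) \<Rightarrow> (nat \<Rightarrow> real) \<Rightarrow> (nat \<Rightarrow> real)" where
  "mat_vec m X x = (\<lambda>i. if i < m then (\<Sum>k<m. X i k * x k) else 0)"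

definition mat_mult :: "nat \<Rightarrow> (nat \<Rightarrow> nat \<Rightarrow> real) \<Rightarrow> (nat \<Rightarrow> nat \<Rightarrow> real) \<Rightarrow> (nat \<Rightarrow> nat \<Rightarrow> real)" where
  "mat_mult m X Y = (\<lambda>i j. if i < m \<and> j < m then (\<Sum>k<m. X i k * Y k j) else 0)"

definition mat_id :: "nat \<Rightarrow> nat \<Rightarrow> nat \<Rightarrow> real" where
  "mat_id m = (\<lambda>i j. if i = j \<and> i < m then 1 else 0)"

fun mat_pow :: "nat \<Rightarrow> (nat \<Rightarrow> nat \<Rightarrow> real) \<Rightarrow> nat \<Rightarrow> (nat \<Rightarrow> nat \<Rightarrow> real)" where
  "mat_pow m X 0 = mat_id m"
| "mat_pow m X (Suc k) = mat_mult m (mat_pow m X k) X"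

definition mat_exp :: "nat \<Rightarrow> (nat \<Rightarrow> nat \<Rightarrow> real) \<Rightarrow> (nat \<Rightarrow> nat \<Rightarrow> real)" where
  "mat_exp m X = (\<lambda>i j. \<Sum>k. mat_pow m X k i j / fact k)"

definition mat_scale :: "real \<Rightarrow> (nat \<Rightarrow> nat \<Rightarrow> real) \<Rightarrow> (nat \<Rightarrow> nat \<Rightarrow> real)" where
  "mat_scale v X = (\<lambda>i j. v * X i j)"

text \<open>Block structure: ds = [d_1,...,d_n] (0-indexed list); block i (0-based) occupies
  coordinates off i ..< off (i+1).\<close>
definition off :: "nat list \<Rightarrow> nat \<Rightarrow> nat" where
  "off ds i = sum_list (take i ds)"

definition in_block :: "nat list \<Rightarrow> nat \<Rightarrow> nat \<Rightarrow> bool" where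
  "in_block ds i j \<longleftrightarrow> i < length ds \<and> off ds i \<le> j \<and> j < off ds (Suc i)"

definition blk :: "nat list \<Rightarrow> nat \<Rightarrow> nat" where
  "blk ds j = (LEAST i. j < off ds (Suc i))"

text \<open>M_t = diag(I, t I, ..., t^(n-1) I).\<close>
definition Mt :: "nat list \<Rightarrow> real \<Rightarrow> (nat \<Rightarrow> real) \<Rightarrow> (nat \<Rightarrow> real)" where
  "Mt ds t p = (\<lambda>j. if j < sum_list ds then t ^ blk ds j * p j else 0)"

definition B_sigma :: "nat \<Rightarrow> (nat \<Rightarrow> nat \<Rightarrow> real) \<Rightarrow> (nat \<Rightarrow> real) \<Rightarrow> (nat \<Rightarrow> real)" where
  "B_sigma d \<sigma> s = (\<lambda>j. if j < d then (\<Sum>k<d. \<sigma> j k * s k) else 0)"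

definition sphere_n :: "nat \<Rightarrow> (nat \<Rightarrow> real) set" where
  "sphere_n d = {s. (\<forall>i\<ge>d. s i = 0) \<and> norm_n d s = 1}"

text \<open>Hypothesis (H): only the blocks A_{i,i-1} are nonzero, and each has rank d_i
  (full row rank: its d_i rows are linearly independent).\<close>
definition hyp_H :: "nat list \<Rightarrow> (nat \<Rightarrow> nat \<Rightarrow> real) \<Rightarrow> bool" where
  "hyp_H ds A \<longleftrightarrow>
     (\<forall>j k. A j k \<noteq> 0 \<longrightarrow> j < sum_list ds \<and> k < sum_list ds \<and> blk ds j = Suc (blk ds k)) \<and>
     (\<forall>i. 1 \<le> i \<and> i < length ds \<longrightarrow>
        (\<forall>a :: nat \<Rightarrow> real.
           (\<forall>k. in_block ds (i - 1) k \<longrightarrow> (\<Sum>j\<in>{off ds i..<off ds (Suc i)}. a j * A j k) = 0)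
           \<longrightarrow> (\<forall>j. in_block ds i j \<longrightarrow> a j = 0)))"

definition hyp_UE :: "nat \<Rightarrow> real \<Rightarrow> (nat \<Rightarrow> nat \<Rightarrow> real) \<Rightarrow> bool" where
  "hyp_UE d \<kappa> \<sigma> \<longleftrightarrow> (\<forall>x :: nat \<Rightarrow> real.
      (norm_n d x)\<^sup>2 / \<kappa> \<le> (\<Sum>i<d. \<Sum>j<d. (\<Sum>k<d. \<sigma> i k * \<sigma> j k) * x j * x i) \<and>
      (\<Sum>i<d. \<Sum>j<d. (\<Sum>k<d. \<sigma> i k * \<sigma> j k) * x j * x i) \<le> \<kappa> * (norm_n d x)\<^sup>2)"

definition hyp_ND :: "nat \<Rightarrow> real \<Rightarrow> real \<Rightarrow> (nat \<Rightarrow> real) measure \<Rightarrow> bool" where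
  "hyp_ND d \<alpha> \<eta> \<mu> \<longleftrightarrow> (\<forall>lam :: nat \<Rightarrow> real.
      ennreal ((norm_n d lam) powr \<alpha> / \<eta>) \<le> (\<integral>\<^sup>+ s. ennreal (\<bar>inner_n d lam s\<bar> powr \<alpha>) \<partial>\<mu>) \<and>
      (\<integral>\<^sup>+ s. ennreal (\<bar>inner_n d lam s\<bar> powr \<alpha>) \<partial>\<mu>) \<le> ennreal (\<eta> * (norm_n d lam) powr \<alpha>))"

definition spectral_measure :: "nat \<Rightarrow> (nat \<Rightarrow> real) measure \<Rightarrow> bool" where
  "spectral_measure d \<mu> \<longleftrightarrow> sets \<mu> = sets (restrict_space borel (sphere_n d)) \<and>
     finite_measure \<mu> \<and>
     (\<forall>E\<in>sets \<mu>. uminus ` E \<in> sets \<mu> \<and> emeasure \<mu> (uminus ` E) = emeasure \<mu> E)"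

end

theory Submission imports Defs "HOL-Computational_Algebra.Polynomial" "HOL-Analysis.Analysis" begin

lemma off_Suc: "off ds (Suc i) = off ds i + (if i < length ds then ds ! i else 0)"
  by (simp add: off_def take_Suc_conv_app_nth)

lemma off_0[simp]: "off ds 0 = 0" by (simp add: off_def)

lemma off_ge: "length ds \<le> i \<Longrightarrow> off ds i = sum_list ds"
  by (simp add: off_def)

lemma off_mono: "i \<le> i' \<Longrightarrow> off ds i \<le> off ds i'"
  by (rule lift_Suc_mono_le[of "off ds"]) (auto simp: off_Suc)

lemma blk_props:
  assumes "j < sum_list ds"
  shows "blk ds j < length ds \<and> in_block ds (blk ds j) j"
proof -
  let ?n = "length ds"
  have ex: "j < off ds (Suc (?n - 1))" using assms off_ge[of ds "Suc (?n - 1)"] by simp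
  have l1: "j < off ds (Suc (blk ds j))" unfolding blk_def by (rule LeastI, rule ex)
  have le: "blk ds j \<le> ?n - 1" unfolding blk_def by (rule Least_le, rule ex)
  have n0: "?n > 0" using assms by (cases ds) auto
  have lt: "blk ds j < ?n" using le n0 by linarith
  have l2: "off ds (blk ds j) \<le> j"
  proof (cases "blk ds j")
    case 0 then show ?thesis by simp
  next
    case (Suc i)
    have "i < blk ds j" using Suc by simp
    hence "\<not> j < off ds (Suc i)" unfolding blk_def by (rule not_less_Least)
    then show ?thesis using Suc by simp
  qed
  show ?thesis using lt l1 l2 by (simp add: in_block_def)
qed

lemma blk_unique:
  assumes "in_block ds i j"
  shows "blk ds j = i"
proof -
  have a: "j < off ds (Suc i)" "off ds i \<le> j" using assms by (auto simp: in_block_def)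
  have le: "blk ds j \<le> i" unfolding blk_def by (rule Least_le, rule a(1))
  have l1: "j < off ds (Suc (blk ds j))" unfolding blk_def by (rule LeastI, rule a(1))
  show ?thesis
  proof (rule ccontr)
    assume "blk ds j \<noteq> i"
    hence "Suc (blk ds j) \<le> i" using le by simp
    hence "off ds (Suc (blk ds j)) \<le> off ds i" by (rule off_mono)
    thus False using l1 a by simp
  qed
qed

lemma in_block_lt: "in_block ds i j \<Longrightarrow> j < sum_list ds"
  using off_mono[of "Suc i" "length ds" ds] off_ge[of ds "length ds"]
  by (auto simp: in_block_def)

lemma in_block_iff:
  assumes "j < sum_list ds" shows "in_block ds i j \<longleftrightarrow> blk ds j = i"
  using blk_props[OF assms] blk_unique by metis

lemma in_block0: "ds \<noteq> [] \<Longrightarrow> in_block ds 0 j \<longleftrightarrow> j < ds ! 0"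
  by (cases ds) (auto simp: in_block_def off_Suc)

lemma block_set: "{off ds i..<off ds (Suc i)} = {j. in_block ds i j} \<or> (length ds \<le> i)"
  by (auto simp: in_block_def)

lemma pow_nz:
  assumes H: "hyp_H ds A" and nz: "mat_pow (sum_list ds) A k j m \<noteq> 0"
  shows "j < sum_list ds \<and> m < sum_list ds \<and> blk ds j = blk ds m + k"
  using nz
proof (induction k arbitrary: j m)
  case 0 then show ?case by (auto simp: mat_id_def split: if_splits)
next
  case (Suc k)
  have jm: "j < sum_list ds" "m < sum_list ds" and
    sne: "(\<Sum>r<sum_list ds. mat_pow (sum_list ds) A k j r * A r m) \<noteq> 0"
    using Suc.prems by (auto simp: mat_mult_def split: if_splits)
  from sum.not_neutral_contains_not_neutral[OF sne] obtain r where
    r: "r < sum_list ds" "mat_pow (sum_list ds) A k j r \<noteq> 0" "A r m \<noteq> 0" by auto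
  have "blk ds j = blk ds r + k" using Suc.IH[OF r(2)] by simp
  moreover have "blk ds r = Suc (blk ds m)" using H r(3) by (auto simp: hyp_H_def)
  ultimately show ?case using jm by simp
qed

lemma pow_zero:
  assumes H: "hyp_H ds A" and k: "length ds \<le> k"
  shows "mat_pow (sum_list ds) A k j m = 0"
proof (rule ccontr)
  assume "mat_pow (sum_list ds) A k j m \<noteq> 0"
  from pow_nz[OF H this] have "j < sum_list ds" "blk ds j = blk ds m + k" by auto
  with blk_props[of j ds] k show False by auto
qed

lemma pow_scale:
  "mat_pow M (mat_scale v X) k = (\<lambda>j m. v ^ k * mat_pow M X k j m)"
proof (induction k)
  case 0 then show ?case by (auto simp: mat_id_def)
next
  case (Suc k)
  show ?case
    by (rule ext)+ (simp only: mat_pow.simps Suc.IH, simp add: mat_mult_def mat_scale_def sum_distrib_left mult.assoc mult.left_commute)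
qed

lemma exp_finite:
  assumes H: "hyp_H ds A"
  shows "mat_exp (sum_list ds) (mat_scale v A) j m
       = (\<Sum>k<length ds. v ^ k / fact k * mat_pow (sum_list ds) A k j m)"
proof -
  have "mat_exp (sum_list ds) (mat_scale v A) j m
      = (\<Sum>k. v ^ k * mat_pow (sum_list ds) A k j m / fact k)"
    by (simp add: mat_exp_def pow_scale)
  also have "\<dots> = (\<Sum>k<length ds. v ^ k * mat_pow (sum_list ds) A k j m / fact k)"
    by (rule suminf_finite) (auto simp: pow_zero[OF H])
  finally show ?thesis by simp
qed

lemma blockset_in: "i < length ds \<Longrightarrow> j \<in> {off ds i..<off ds (Suc i)} \<longleftrightarrow> in_block ds i j"
  by (auto simp: in_block_def)

lemma rank_chain:
  assumes H: "hyp_H ds A"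
  shows "r + k < length ds \<Longrightarrow>
    (\<forall>m. in_block ds r m \<longrightarrow>
       (\<Sum>j\<in>{off ds (r+k)..<off ds (Suc (r+k))}. a j * mat_pow (sum_list ds) A k j m) = 0) \<Longrightarrow>
    in_block ds (r+k) j \<Longrightarrow> a j = 0"
proof (induction k arbitrary: r j)
  case 0
  have jN: "j < sum_list ds" using in_block_lt[OF 0(3)] .
  have jin: "j \<in> {off ds r..<off ds (Suc r)}" using 0(3) by (auto simp: in_block_def)
  have "0 = (\<Sum>j'\<in>{off ds r..<off ds (Suc r)}. a j' * mat_pow (sum_list ds) A 0 j' j)"
    using 0(2) 0(3) by simp
  also have "\<dots> = (\<Sum>j'\<in>{off ds r..<off ds (Suc r)}. if j' = j then a j else 0)"
    by (rule sum.cong) (auto simp: mat_id_def jN)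
  also have "\<dots> = a j" using jin by simp
  finally show ?case by simp
next
  case (Suc k)
  let ?N = "sum_list ds"
  let ?S = "{off ds (r + Suc k)..<off ds (Suc (r + Suc k))}"
  let ?P = "mat_pow ?N A"
  define c where "c s = (\<Sum>j\<in>?S. a j * ?P k j s)" for s
  have cz: "c s = 0" if s: "in_block ds (Suc r) s" for s
  proof -
    have r1: "1 \<le> Suc r" "Suc r < length ds" using Suc.prems(1) by auto
    have "\<forall>m. in_block ds (Suc r - 1) m \<longrightarrow>
         (\<Sum>s\<in>{off ds (Suc r)..<off ds (Suc (Suc r))}. c s * A s m) = 0"
    proof (intro allI impI)
      fix m assume "in_block ds (Suc r - 1) m"
      hence m: "in_block ds r m" by simp
      have mN: "m < ?N" using in_block_lt[OF m] .
      have "0 = (\<Sum>j\<in>?S. a j * ?P (Suc k) j m)" using Suc.prems(2) m by simp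
      also have "\<dots> = (\<Sum>j\<in>?S. a j * (\<Sum>s<?N. ?P k j s * A s m))"
      proof (rule sum.cong)
        fix j assume "j \<in> ?S"
        hence "in_block ds (r + Suc k) j" using Suc.prems(1) blockset_in by blast
        hence "j < ?N" by (rule in_block_lt)
        thus "a j * ?P (Suc k) j m = a j * (\<Sum>s<?N. ?P k j s * A s m)"
          using mN by (simp add: mat_mult_def)
      qed simp
      also have "\<dots> = (\<Sum>s<?N. c s * A s m)"
        by (simp add: c_def sum_distrib_left sum_distrib_right mult.assoc, rule sum.swap)
      also have "\<dots> = (\<Sum>s\<in>{off ds (Suc r)..<off ds (Suc (Suc r))}. c s * A s m)"
      proof (rule sum.mono_neutral_right)
        show "{off ds (Suc r)..<off ds (Suc (Suc r))} \<subseteq> {..<?N}"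
          using in_block_lt blockset_in[OF r1(2)] by blast
        show "\<forall>s\<in>{..<?N} - {off ds (Suc r)..<off ds (Suc (Suc r))}. c s * A s m = 0"
        proof
          fix s assume s: "s \<in> {..<?N} - {off ds (Suc r)..<off ds (Suc (Suc r))}"
          show "c s * A s m = 0"
          proof (rule ccontr)
            assume "c s * A s m \<noteq> 0"
            hence "A s m \<noteq> 0" by simp
            hence "blk ds s = Suc (blk ds m)" using H by (auto simp: hyp_H_def)
            hence "blk ds s = Suc r" using blk_unique[OF m] by simp
            hence "in_block ds (Suc r) s" using s in_block_iff by auto
            thus False using s blockset_in[OF r1(2)] by blast
          qed
        qed
      qed simp
      finally show "(\<Sum>s\<in>{off ds (Suc r)..<off ds (Suc (Suc r))}. c s * A s m) = 0" by simp
    qed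
    with H r1 s show ?thesis unfolding hyp_H_def by blast
  qed
  show ?case
    by (rule Suc.IH[of "Suc r"]) (use Suc.prems cz c_def in auto)
qed

lemma qual:
  assumes H: "hyp_H ds A" and ne: "ds \<noteq> []"
    and z: "\<forall>k<length ds. \<forall>l<ds!0. (\<Sum>j<sum_list ds. q j * mat_pow (sum_list ds) A k j l) = 0"
    and j0: "j0 < sum_list ds"
  shows "q j0 = 0"
proof -
  let ?N = "sum_list ds"
  define k where "k = blk ds j0"
  have k: "k < length ds" "in_block ds k j0" using blk_props[OF j0] k_def by auto
  show ?thesis
  proof (rule rank_chain[OF H, of 0 k q])
    show "0 + k < length ds" using k by simp
    show "in_block ds (0 + k) j0" using k by simp
    show "\<forall>m. in_block ds 0 m \<longrightarrow>
      (\<Sum>j\<in>{off ds (0 + k)..<off ds (Suc (0 + k))}. q j * mat_pow ?N A k j m) = 0"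
    proof (intro allI impI)
      fix m assume m: "in_block ds 0 m"
      have "(\<Sum>j<?N. q j * mat_pow ?N A k j m) = (\<Sum>j\<in>{off ds k..<off ds (Suc k)}. q j * mat_pow ?N A k j m)"
      proof (rule sum.mono_neutral_right)
        show "{off ds k..<off ds (Suc k)} \<subseteq> {..<?N}"
          using in_block_lt blockset_in[OF k(1)] by blast
        show "\<forall>j\<in>{..<?N} - {off ds k..<off ds (Suc k)}. q j * mat_pow ?N A k j m = 0"
        proof
          fix j assume j: "j \<in> {..<?N} - {off ds k..<off ds (Suc k)}"
          show "q j * mat_pow ?N A k j m = 0"
          proof (rule ccontr)
            assume "q j * mat_pow ?N A k j m \<noteq> 0"
            hence "mat_pow ?N A k j m \<noteq> 0" by simp
            from pow_nz[OF H this] have "blk ds j = blk ds m + k" by simp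
            hence "blk ds j = k" using blk_unique[OF m] by simp
            hence "in_block ds k j" using j in_block_iff by auto
            thus False using j blockset_in[OF k(1)] by blast
          qed
        qed
      qed simp
      moreover have "m < ds ! 0" using m in_block0[OF ne] by simp
      ultimately show "(\<Sum>j\<in>{off ds (0 + k)..<off ds (Suc (0 + k))}. q j * mat_pow ?N A k j m) = 0"
        using z k(1) by simp
    qed
  qed
qed

lemma poly_zero:
  fixes c x :: "nat \<Rightarrow> real"
  assumes inj: "inj_on x {..<n}" and z: "\<forall>i<n. (\<Sum>k<n. c k * x i ^ k) = 0" and k: "k < n"
  shows "c k = 0"
proof -
  define p where "p = (\<Sum>k<n. monom (c k) k)"
  have cp: "coeff p i = (if i < n then c i else 0)" for i
    by (simp add: p_def coeff_sum)
  have pv: "poly p y = (\<Sum>k<n. c k * y ^ k)" for y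
    by (simp add: p_def poly_sum poly_monom)
  show ?thesis
  proof (cases "p = 0")
    case True then show ?thesis using cp[of k] k by simp
  next
    case False
    have "x ` {..<n} \<subseteq> {y. poly p y = 0}" using z pv by auto
    hence "card (x ` {..<n}) \<le> card {y. poly p y = 0}"
      by (intro card_mono poly_roots_finite False)
    hence "n \<le> card {y. poly p y = 0}" using card_image[OF inj] by simp
    also have "\<dots> \<le> degree p" by (rule card_poly_roots_bound[OF False])
    finally have "n \<le> degree p" .
    moreover have "degree p < n"
    proof (cases n)
      case 0 then show ?thesis using k by simp
    next
      case (Suc n') 
      have "degree p \<le> n'" by (rule degree_le) (auto simp: cp Suc)
      thus ?thesis using Suc by simp
    qed
    ultimately show ?thesis by simp
  qed
qed

lemma coord_cont[continuous_intros]: "continuous_on S (\<lambda>z::nat\<Rightarrow>real. z j)"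
  by (rule continuous_on_subset[OF continuous_on_product_coordinates]) simp

lemma compact_Pi_fun:
  fixes S :: "nat \<Rightarrow> real set"
  assumes "\<And>j. compact (S j)"
  shows "compact (Pi UNIV S)"
proof -
  have "compactin (product_topology (\<lambda>i. euclidean) UNIV) (PiE UNIV S)"
    using assms by (simp add: compactin_PiE)
  thus ?thesis by (simp add: euclidean_product_topology PiE_UNIV_domain)
qed

lemma compact_min:
  fixes S :: "nat \<Rightarrow> real set" and G :: "(nat \<Rightarrow> real) \<Rightarrow> real"
  assumes S: "\<And>j. compact (S j)"
    and K: "K = Pi UNIV S \<inter> {z. (\<Sum>j<M. (z j)\<^sup>2) = 1}"
    and ne: "K \<noteq> {}"
    and G: "continuous_on UNIV G"
    and pos: "\<And>z. z \<in> K \<Longrightarrow> G z > 0"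
  shows "\<exists>c>0. \<forall>z\<in>K. c \<le> G z"
proof -
  have cl: "closed {z::nat\<Rightarrow>real. (\<Sum>j<M. (z j)\<^sup>2) = 1}"
    by (rule closed_Collect_eq) (auto intro!: continuous_intros)
  have "compact K" unfolding K by (rule compact_Int_closed[OF compact_Pi_fun[OF S] cl])
  from continuous_attains_inf[OF this ne continuous_on_subset[OF G]]
  obtain z0 where "z0 \<in> K" "\<forall>y\<in>K. G z0 \<le> G y" by auto
  thus ?thesis using pos by blast
qed

definition Wv :: "nat list \<Rightarrow> (nat \<Rightarrow> nat \<Rightarrow> real) \<Rightarrow> (nat \<Rightarrow> real) \<Rightarrow> real \<Rightarrow> nat \<Rightarrow> real" where
  "Wv ds A q v l = (\<Sum>j<sum_list ds. q j * (\<Sum>k<length ds. v ^ k / fact k * mat_pow (sum_list ds) A k j l))"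

definition Jint :: "nat \<Rightarrow> nat \<Rightarrow> real set" where
  "Jint n i = {real i / real n .. (real i + 1/2) / real n}"

lemma Jint_lt:
  assumes "i < i'" "x \<in> Jint n i" "y \<in> Jint n i'" "n > 0"
  shows "x < y"
proof -
  have "x \<le> (real i + 1/2) / real n" using assms(2) by (simp add: Jint_def)
  also have "\<dots> < real i' / real n"
    using assms(1,4) by (intro divide_strict_right_mono) auto
  also have "\<dots> \<le> y" using assms(3) by (simp add: Jint_def)
  finally show ?thesis .
qed

lemma Jint_sub: "i < n \<Longrightarrow> Jint n i \<subseteq> {0..1}"
  by (auto simp: Jint_def field_simps)

lemma Wv_poly: "Wv ds A q v l =
   (\<Sum>k<length ds. ((\<Sum>j<sum_list ds. q j * mat_pow (sum_list ds) A k j l) / fact k) * v ^ k)"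
  unfolding Wv_def
  by (simp add: sum_distrib_left sum_divide_distrib sum_distrib_right algebra_simps sum.swap[of _ "{..<length ds}"])

lemma coerc:
  assumes H: "hyp_H ds A" and ne: "ds \<noteq> []" and Npos: "0 < sum_list ds"
  shows "\<exists>c>0. \<forall>q. (\<forall>j\<ge>sum_list ds. q j = 0) \<longrightarrow>
     (\<exists>i<length ds. \<forall>v\<in>Jint (length ds) i.
        c * (\<Sum>j<sum_list ds. (q j)\<^sup>2) \<le> (\<Sum>l<ds!0. (Wv ds A q v l)\<^sup>2))"
proof -
  define N where "N = sum_list ds"
  define n where "n = length ds"
  define d where "d = ds ! 0"
  have npos: "n > 0" using ne n_def by simp
  define S where "S j = (if j < N then {-1..1} else if j < N + n then Jint n (j - N) else {0::real})" for j
  define K where "K = Pi UNIV S \<inter> {z. (\<Sum>j<N. (z j)\<^sup>2) = 1}"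
  define G where "G z = (\<Sum>i<n. \<Sum>l<d. (Wv ds A z (z (N + i)) l)\<^sup>2)" for z
  have Sc: "compact (S j)" for j by (simp add: S_def Jint_def)
  have Kne: "K \<noteq> {}"
  proof -
    define z0 where "z0 j = (if j = 0 then 1 else if N \<le> j \<and> j < N + n then real (j - N) / real n else 0)" for j
    have "z0 \<in> Pi UNIV S"
      using Npos N_def npos by (auto simp: z0_def S_def Jint_def divide_right_mono)
    moreover have "(\<Sum>j<N. (z0 j)\<^sup>2) = 1"
    proof -
      have "(\<Sum>j<N. (z0 j)\<^sup>2) = (\<Sum>j<N. if j = 0 then 1 else 0)"
        by (rule sum.cong) (auto simp: z0_def)
      also have "\<dots> = 1" using Npos N_def by simp
      finally show ?thesis .
    qed
    ultimately show ?thesis unfolding K_def by blast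
  qed
  have Gc: "continuous_on UNIV G"
    unfolding G_def Wv_def by (intro continuous_intros) auto
  have Gpos: "G z > 0" if zK: "z \<in> K" for z
  proof (rule ccontr)
    assume "\<not> G z > 0"
    moreover have "G z \<ge> 0" unfolding G_def by (intro sum_nonneg) auto
    ultimately have G0: "G z = 0" by simp
    have W0: "Wv ds A z (z (N + i)) l = 0" if "i < n" "l < d" for i l
    proof -
      have "(\<Sum>l<d. (Wv ds A z (z (N + i)) l)\<^sup>2) = 0"
        using G0 unfolding G_def by (subst (asm) sum_nonneg_eq_0_iff) (auto intro!: sum_nonneg that)
      thus ?thesis using that by (subst (asm) sum_nonneg_eq_0_iff) auto
    qed
    have xin: "z (N + i) \<in> Jint n i" if "i < n" for i
    proof -
      have "z (N + i) \<in> S (N + i)" using zK unfolding K_def by (auto simp: Pi_iff)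
      thus ?thesis using that by (simp add: S_def)
    qed
    have inj: "inj_on (\<lambda>i. z (N + i)) {..<n}"
    proof (rule inj_onI)
      fix i i' assume a: "i \<in> {..<n}" "i' \<in> {..<n}" "z (N + i) = z (N + i')"
      show "i = i'"
      proof (rule ccontr)
        assume "i \<noteq> i'"
        hence "i < i' \<or> i' < i" by auto
        thus False using Jint_lt[OF _ xin xin npos] a by fastforce
      qed
    qed
    have cz: "(\<Sum>j<N. z j * mat_pow N A k j l) = 0" if "k < n" "l < d" for k l
    proof -
      have "(\<Sum>j<N. z j * mat_pow N A k j l) / fact k = 0"
        using poly_zero[OF inj, of "\<lambda>k. (\<Sum>j<N. z j * mat_pow N A k j l) / fact k" k] that W0
        by (simp add: Wv_poly N_def n_def)
      thus ?thesis by simp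
    qed
    have "\<forall>j<N. z j = 0"
      using qual[OF H ne, of z] cz by (simp add: N_def n_def d_def)
    hence "(\<Sum>j<N. (z j)\<^sup>2) = 0" by simp
    thus False using zK unfolding K_def by simp
  qed
  obtain c where c: "c > 0" "\<forall>z\<in>K. c \<le> G z"
    using compact_min[OF Sc K_def Kne Gc Gpos] by blast
  show ?thesis
  proof (intro exI[of _ "c / n"] conjI allI impI)
    show "c / n > 0" using c npos by simp
    fix q :: "nat \<Rightarrow> real" assume q0: "\<forall>j\<ge>sum_list ds. q j = 0"
    define r2 where "r2 = (\<Sum>j<N. (q j)\<^sup>2)"
    have r2nn: "r2 \<ge> 0" unfolding r2_def by (intro sum_nonneg) auto
    show "\<exists>i<length ds. \<forall>v\<in>Jint (length ds) i.
        c / n * (\<Sum>j<sum_list ds. (q j)\<^sup>2) \<le> (\<Sum>l<ds!0. (Wv ds A q v l)\<^sup>2)"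
    proof (cases "r2 = 0")
      case True
      show ?thesis using npos True unfolding r2_def N_def n_def
        by (intro exI[of _ 0]) (auto intro!: sum_nonneg)
    next
      case False
      hence r2p: "r2 > 0" using r2nn by simp
      define \<rho> where "\<rho> = sqrt r2"
      have rp: "\<rho> > 0" using r2p \<rho>_def by simp
      have rr: "\<rho>\<^sup>2 = r2" using r2nn \<rho>_def by simp
      show ?thesis
      proof (rule ccontr)
        assume "\<not> ?thesis"
        hence "\<forall>i<n. \<exists>v. v \<in> Jint n i \<and> (\<Sum>l<d. (Wv ds A q v l)\<^sup>2) < c / n * r2"
          unfolding n_def d_def r2_def N_def by (auto simp: not_le)
        then obtain x where x: "\<And>i. i < n \<Longrightarrow> x i \<in> Jint n i \<and> (\<Sum>l<d. (Wv ds A q (x i) l)\<^sup>2) < c / n * r2"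
          by metis
        define z where "z j = (if j < N then q j / \<rho> else if j < N + n then x (j - N) else 0)" for j
        have qb: "\<bar>q j\<bar> \<le> \<rho>" if "j < N" for j
        proof -
          have "(q j)\<^sup>2 \<le> r2" unfolding r2_def
            by (rule member_le_sum) (use that in auto)
          hence "sqrt ((q j)\<^sup>2) \<le> \<rho>" unfolding \<rho>_def by (rule real_sqrt_le_mono)
          thus ?thesis by (simp only: real_sqrt_abs)
        qed
        have "z \<in> Pi UNIV S"
        proof
          fix j
          show "z j \<in> S j"
          proof (cases "j < N")
            case True
            have "\<bar>q j / \<rho>\<bar> \<le> 1" using qb[OF True] rp by (simp add: divide_le_eq)
            hence "-1 \<le> q j / \<rho> \<and> q j / \<rho> \<le> 1" by (simp only: abs_le_iff, elim conjE, intro conjI, linarith, simp)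
            thus ?thesis using True unfolding z_def S_def by simp
          next
            case False
            show ?thesis
            proof (cases "j < N + n")
              case True
              hence "j - N < n" using False by simp
              hence "x (j - N) \<in> Jint n (j - N)" using x by blast
              thus ?thesis using False True by (simp add: z_def S_def)
            qed (use False in \<open>simp add: z_def S_def\<close>)
          qed
        qed
        moreover have "(\<Sum>j<N. (z j)\<^sup>2) = 1"
        proof -
          have "(\<Sum>j<N. (z j)\<^sup>2) = (\<Sum>j<N. (q j)\<^sup>2 / \<rho>\<^sup>2)"
            by (rule sum.cong) (auto simp: z_def power_divide)
          also have "\<dots> = 1" using rr r2p by (simp add: sum_divide_distrib[symmetric] r2_def)
          finally show ?thesis .
        qed
        ultimately have zK: "z \<in> K" unfolding K_def by blast
        have Wz: "Wv ds A z v l = Wv ds A q v l / \<rho>" for v l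
          unfolding Wv_def N_def[symmetric]
          by (simp add: sum_divide_distrib z_def)
        have "G z = (\<Sum>i<n. (\<Sum>l<d. (Wv ds A q (x i) l)\<^sup>2) / r2)"
          unfolding G_def
          by (intro sum.cong refl) (simp add: z_def Wz power_divide rr sum_divide_distrib)
        also have "\<dots> < (\<Sum>i<n. c / n)"
        proof (rule sum_strict_mono)
          fix i assume "i \<in> {..<n}"
          hence "(\<Sum>l<d. (Wv ds A q (x i) l)\<^sup>2) < c / n * r2" using x by simp
          thus "(\<Sum>l<d. (Wv ds A q (x i) l)\<^sup>2) / r2 < c / n" using r2p by (simp add: divide_less_eq)
        qed (use npos in auto)
        also have "\<dots> = c" using npos by simp
        finally have "G z < c" .
        moreover have "c \<le> G z" using c(2) zK by blast
        ultimately show False by simp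
      qed
    qed
  qed
qed

lemma ident:
  assumes H: "hyp_H ds A" and dN: "d \<le> sum_list ds"
  shows "inner_n (sum_list ds) q (mat_vec (sum_list ds) (mat_exp (sum_list ds) (mat_scale v A)) (B_sigma d \<sigma> s))
       = inner_n d (\<lambda>k. \<Sum>m<d. Wv ds A q v m * \<sigma> m k) s"
proof -
  let ?N = "sum_list ds"
  define E where "E j m = mat_exp ?N (mat_scale v A) j m" for j m
  have W: "Wv ds A q v m = (\<Sum>j<?N. q j * E j m)" for m
    by (simp add: Wv_def E_def exp_finite[OF H])
  have "inner_n ?N q (mat_vec ?N (mat_exp ?N (mat_scale v A)) (B_sigma d \<sigma> s))
      = (\<Sum>j<?N. q j * (\<Sum>m<?N. E j m * B_sigma d \<sigma> s m))"
    unfolding inner_n_def mat_vec_def E_def by (intro sum.cong) auto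
  also have "\<dots> = (\<Sum>j<?N. q j * (\<Sum>m<d. E j m * (\<Sum>k<d. \<sigma> m k * s k)))"
  proof -
    have "(\<Sum>m<?N. E j m * B_sigma d \<sigma> s m) = (\<Sum>m<d. E j m * (\<Sum>k<d. \<sigma> m k * s k))" for j
      by (rule sum.mono_neutral_cong_right) (use dN in \<open>auto simp: B_sigma_def\<close>)
    thus ?thesis by simp
  qed
  also have "\<dots> = (\<Sum>j<?N. \<Sum>m<d. \<Sum>k<d. q j * E j m * \<sigma> m k * s k)"
    by (simp add: sum_distrib_left mult.assoc)
  also have "\<dots> = (\<Sum>m<d. \<Sum>j<?N. \<Sum>k<d. q j * E j m * \<sigma> m k * s k)"
    by (rule sum.swap)
  also have "\<dots> = (\<Sum>m<d. \<Sum>k<d. \<Sum>j<?N. q j * E j m * \<sigma> m k * s k)"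
    by (intro sum.cong refl sum.swap)
  also have "\<dots> = (\<Sum>k<d. \<Sum>m<d. \<Sum>j<?N. q j * E j m * \<sigma> m k * s k)"
    by (rule sum.swap)
  also have "\<dots> = inner_n d (\<lambda>k. \<Sum>m<d. Wv ds A q v m * \<sigma> m k) s"
    unfolding inner_n_def W by (simp add: sum_distrib_right)
  finally show ?thesis .
qed

lemma ue_bound:
  assumes UE: "hyp_UE d \<kappa> \<sigma>"
  shows "(\<Sum>l<d. (w l)\<^sup>2) / \<kappa> \<le> (norm_n d (\<lambda>k. \<Sum>m<d. w m * \<sigma> m k))\<^sup>2"
proof -
  have n1: "(norm_n d w)\<^sup>2 = (\<Sum>l<d. (w l)\<^sup>2)"
    unfolding norm_n_def by (simp add: sum_nonneg)
  have n2: "(norm_n d (\<lambda>k. \<Sum>m<d. w m * \<sigma> m k))\<^sup>2 = (\<Sum>k<d. (\<Sum>m<d. w m * \<sigma> m k)\<^sup>2)"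
    unfolding norm_n_def by (simp add: sum_nonneg)
  have "(\<Sum>i<d. \<Sum>j<d. (\<Sum>k<d. \<sigma> i k * \<sigma> j k) * w j * w i) = (\<Sum>k<d. (\<Sum>m<d. w m * \<sigma> m k)\<^sup>2)"
  proof -
    have "(\<Sum>i<d. \<Sum>j<d. (\<Sum>k<d. \<sigma> i k * \<sigma> j k) * w j * w i)
        = (\<Sum>i<d. \<Sum>j<d. \<Sum>k<d. (w i * \<sigma> i k) * (w j * \<sigma> j k))"
      by (intro sum.cong refl) (simp add: sum_distrib_left mult_ac)
    also have "\<dots> = (\<Sum>i<d. \<Sum>k<d. \<Sum>j<d. (w i * \<sigma> i k) * (w j * \<sigma> j k))"
      by (intro sum.cong refl sum.swap)
    also have "\<dots> = (\<Sum>k<d. \<Sum>i<d. \<Sum>j<d. (w i * \<sigma> i k) * (w j * \<sigma> j k))"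
      by (rule sum.swap)
    also have "\<dots> = (\<Sum>k<d. (\<Sum>m<d. w m * \<sigma> m k)\<^sup>2)"
      by (simp add: power2_eq_square sum_product)
    finally show ?thesis .
  qed
  moreover have "(norm_n d w)\<^sup>2 / \<kappa> \<le> (\<Sum>i<d. \<Sum>j<d. (\<Sum>k<d. \<sigma> i k * \<sigma> j k) * w j * w i)"
    using UE unfolding hyp_UE_def by blast
  ultimately show ?thesis by (simp only: n1 n2)
qed

theorem lemmaA1:
  fixes ds :: "nat list" and d N :: nat and \<alpha> \<kappa> \<eta> :: real
    and \<sigma> A :: "nat \<Rightarrow> nat \<Rightarrow> real" and \<mu> :: "(nat \<Rightarrow> real) measure"
  assumes n_pos: "length ds \<ge> 1"
    and d_def: "d = ds ! 0"
    and N_def: "N = sum_list ds"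
    and d_lt: "1 \<le> d" "d < N"
    and ds_pos: "\<forall>i<length ds. ds ! i > 0"
    and ds_sorted: "sorted_wrt (\<ge>) ds"
    and alpha: "0 < \<alpha>" "\<alpha> < 2"
    and kappa: "\<kappa> > 0" and UE: "hyp_UE d \<kappa> \<sigma>"
    and eta: "\<eta> > 0" and ND: "hyp_ND d \<alpha> \<eta> \<mu>"
    and mu: "spectral_measure d \<mu>"
    and H: "hyp_H ds A"
  shows "\<exists>c>0. \<forall>T>0. \<forall>t\<in>{-T..T}. \<forall>p :: nat \<Rightarrow> real.
     (\<integral>\<^sup>+ v\<in>{0..1}. (\<integral>\<^sup>+ s. ennreal (\<bar>inner_n N (Mt ds t p)
          (mat_vec N (mat_exp N (mat_scale v A)) (B_sigma d \<sigma> s))\<bar> powr \<alpha>) \<partial>\<mu>) \<partial>lborel)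
     \<ge> ennreal (c * (norm_n N (Mt ds t p)) powr \<alpha>)"
proof -
  have ne: "ds \<noteq> []" using n_pos by auto
  have Npos: "0 < sum_list ds" using d_lt N_def by simp
  have dN: "d \<le> sum_list ds" using d_lt N_def by simp
  obtain c0 where c0: "c0 > 0" and C: "\<forall>q. (\<forall>j\<ge>sum_list ds. q j = 0) \<longrightarrow>
     (\<exists>i<length ds. \<forall>v\<in>Jint (length ds) i.
        c0 * (\<Sum>j<sum_list ds. (q j)\<^sup>2) \<le> (\<Sum>l<ds!0. (Wv ds A q v l)\<^sup>2))"
    using coerc[OF H ne Npos] by blast
  define n where "n = length ds"
  define K1 where "K1 = (sqrt (c0 / \<kappa>)) powr \<alpha> / \<eta>"
  define c where "c = K1 / (2 * n)"
  have npos: "n > 0" using ne n_def by simp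
  have sq: "sqrt (c0 / \<kappa>) > 0" using c0 kappa by simp
  have K1pos: "K1 > 0" unfolding K1_def using sq eta by (intro divide_pos_pos) auto
  show ?thesis
  proof (intro exI[of _ c] conjI allI impI ballI)
    show "c > 0" unfolding c_def using K1pos npos by simp
    fix T :: real and t and p :: "nat \<Rightarrow> real"
    define q where "q = Mt ds t p"
    have q0: "\<forall>j\<ge>sum_list ds. q j = 0" by (simp add: q_def Mt_def)
    obtain i where i: "i < n" and iv: "\<forall>v\<in>Jint n i.
        c0 * (\<Sum>j<N. (q j)\<^sup>2) \<le> (\<Sum>l<d. (Wv ds A q v l)\<^sup>2)"
      using C q0 unfolding n_def d_def N_def by blast
    define \<rho> where "\<rho> = norm_n N q"
    have rnn: "\<rho> \<ge> 0" unfolding \<rho>_def norm_n_def by (simp add: sum_nonneg)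
    have r2: "\<rho>\<^sup>2 = (\<Sum>j<N. (q j)\<^sup>2)" unfolding \<rho>_def norm_n_def by (simp add: sum_nonneg)
    define F where "F v = (\<integral>\<^sup>+ s. ennreal (\<bar>inner_n N q
          (mat_vec N (mat_exp N (mat_scale v A)) (B_sigma d \<sigma> s))\<bar> powr \<alpha>) \<partial>\<mu>)" for v
    have inner: "ennreal (K1 * \<rho> powr \<alpha>) \<le> F v" if v: "v \<in> Jint n i" for v
    proof -
      define lam where "lam = (\<lambda>k. \<Sum>m<d. Wv ds A q v m * \<sigma> m k)"
      have eq: "F v = (\<integral>\<^sup>+ s. ennreal (\<bar>inner_n d lam s\<bar> powr \<alpha>) \<partial>\<mu>)"
        unfolding F_def lam_def N_def using ident[OF H dN] by simp
      have "(\<Sum>l<d. (Wv ds A q v l)\<^sup>2) / \<kappa> \<le> (norm_n d lam)\<^sup>2"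
        unfolding lam_def by (rule ue_bound[OF UE])
      moreover have "c0 * \<rho>\<^sup>2 / \<kappa> \<le> (\<Sum>l<d. (Wv ds A q v l)\<^sup>2) / \<kappa>"
        using iv v kappa r2 by (simp add: divide_right_mono)
      ultimately have "(sqrt (c0 / \<kappa>) * \<rho>)\<^sup>2 \<le> (norm_n d lam)\<^sup>2"
        using c0 kappa by (simp add: power_mult_distrib)
      hence lb: "sqrt (c0 / \<kappa>) * \<rho> \<le> norm_n d lam"
        by (rule power2_le_imp_le) (simp add: norm_n_def sum_nonneg)
      have "K1 * \<rho> powr \<alpha> = (sqrt (c0 / \<kappa>) * \<rho>) powr \<alpha> / \<eta>"
        unfolding K1_def using sq rnn by (simp add: powr_mult)
      also have "\<dots> \<le> norm_n d lam powr \<alpha> / \<eta>"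
        using lb sq rnn alpha eta by (intro divide_right_mono powr_mono2) auto
      finally have "ennreal (K1 * \<rho> powr \<alpha>) \<le> ennreal (norm_n d lam powr \<alpha> / \<eta>)"
        by (rule ennreal_leI)
      also have "\<dots> \<le> F v" using ND unfolding eq hyp_ND_def by blast
      finally show ?thesis .
    qed
    have "ennreal (c * \<rho> powr \<alpha>) = ennreal (K1 * \<rho> powr \<alpha>) * ennreal (1 / (2 * n))"
      unfolding c_def using K1pos rnn by (simp add: ennreal_mult[symmetric])
    also have "ennreal (1 / (2 * n)) = emeasure lborel (Jint n i)"
    proof -
      have "(real i + 1/2) / real n - real i / real n = 1 / (2 * n)"
        using npos by (simp add: field_simps)
      moreover have "real i / real n \<le> (real i + 1/2) / real n"
        using npos by (simp add: divide_right_mono)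
      ultimately show ?thesis unfolding Jint_def by (simp add: emeasure_lborel_Icc)
    qed
    also have "ennreal (K1 * \<rho> powr \<alpha>) * emeasure lborel (Jint n i)
        = (\<integral>\<^sup>+ v. ennreal (K1 * \<rho> powr \<alpha>) * indicator (Jint n i) v \<partial>lborel)"
      by (rule nn_integral_cmult_indicator[symmetric]) (simp add: Jint_def)
    also have "\<dots> \<le> (\<integral>\<^sup>+ v. F v * indicator {0..1} v \<partial>lborel)"
    proof (rule nn_integral_mono)
      fix v
      show "ennreal (K1 * \<rho> powr \<alpha>) * indicator (Jint n i) v \<le> F v * indicator {0..1} v"
      proof (cases "v \<in> Jint n i")
        case True
        hence "v \<in> {0..1}" using Jint_sub[OF i] by blast
        thus ?thesis using True inner[OF True] by simp
      qed simp
    qed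
    finally show "ennreal (c * (norm_n N (Mt ds t p)) powr \<alpha>) \<le>
      (\<integral>\<^sup>+ v\<in>{0..1}. (\<integral>\<^sup>+ s. ennreal (\<bar>inner_n N (Mt ds t p)
          (mat_vec N (mat_exp N (mat_scale v A)) (B_sigma d \<sigma> s))\<bar> powr \<alpha>) \<partial>\<mu>) \<partial>lborel)"
      unfolding F_def q_def \<rho>_def .
  qed
qed

end
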